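(* Let $n$ be a positive integer such that $n\equiv \pm 2\pmod{12}$. Then it is possible to place $n-1$ queens on $\mathbb{Z}_n^2$ without conflict.
   Context: Queens are placed on distinct fields of the torus board $\mathbb{Z}_n^2$. Two queens at distinct fields $(x,y),(x',y')$ are in conflict iff $x=x'$, or $y=y'$, or $x+y=x'+y'$, or $x-y=x'-y'$ in $\mathbb{Z}_n$ (equivalently, the difference of the fields is $t\mathbf{x}$ for some $t\in\mathbb{Z}_n$ and nonzero $\mathbf{x}\in\{-1,0,1\}^2$). A placement is without conflict if no two queens are in conflict. *)

theory Defs
  imports Main
begin

text \<open>Fields of the torus board Z_n^2 are represented by pairs (x,y) of integers
  with 0 \<le> x, y < n; arithmetic of Z_n is arithmetic modulo n.\<close>

definition torus_board :: "int \<Rightarrow> (int \<times> int) set" where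
  "torus_board n = {0..<n} \<times> {0..<n}"

definition queens_conflict :: "int \<Rightarrow> int \<times> int \<Rightarrow> int \<times> int \<Rightarrow> bool" where
  "queens_conflict n p q \<longleftrightarrow> p \<noteq> q \<and>
     (fst p mod n = fst q mod n \<or> snd p mod n = snd q mod n \<or>
      (fst p + snd p) mod n = (fst q + snd q) mod n \<or>
      (fst p - snd p) mod n = (fst q - snd q) mod n)"

definition conflict_free :: "int \<Rightarrow> (int \<times> int) set \<Rightarrow> bool" where
  "conflict_free n Q \<longleftrightarrow> (\<forall>p\<in>Q. \<forall>q\<in>Q. \<not> queens_conflict n p q)"

end

theory Submission imports Defs begin
lemma three: fixes n k :: int assumes "n mod 3 \<noteq> 0" "n dvd 3*k" shows "n dvd k"
proof -
  obtain a where a: "n = 3*a + 1 \<or> n = 3*a + 2"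
  proof -
    have e: "n = 3*(n div 3) + n mod 3" by simp
    have m: "n mod 3 = 1 \<or> n mod 3 = 2" using assms(1) by presburger
    show ?thesis by (rule that[of "n div 3"]) (use e m in linarith)
  qed
  thus ?thesis
  proof
    assume h: "n = 3*a+1"
    have "k = n*k - a*(3*k)" using h by (simp add: algebra_simps)
    thus ?thesis using assms(2) by (metis dvd_diff dvd_mult dvd_triv_left)
  next
    assume h: "n = 3*a+2"
    have "k = (a+1)*(3*k) - n*k" using h by (simp add: algebra_simps)
    thus ?thesis using assms(2) by (metis dvd_diff dvd_mult dvd_triv_left)
  qed
qed
lemma bnd: fixes n d :: int assumes "n > 0" "2*\<bar>d\<bar> < n" "n dvd 2*d" shows "d = 0"
proof -
  obtain t where t: "2*d = n*t" using assms(3) by (auto simp: dvd_def)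
  have "t = 0"
  proof (rule ccontr)
    assume "\<not> ?thesis"
    hence "t \<ge> 1 \<or> t \<le> -1" by auto
    thus False
    proof
      assume "t \<ge> 1" hence "n*t \<ge> n*1" using assms(1) by (simp add: mult_left_mono)
      thus False using t assms(2) by linarith
    next
      assume "t \<le> -1" hence "n*t \<le> n*(-1)" using assms(1) by (intro mult_left_mono) auto
      thus False using t assms(2) by linarith
    qed
  qed
  thus ?thesis using t by simp
qed
lemma bnd0: fixes n k :: int assumes "n > 0" "\<bar>k\<bar> < n" "n dvd k" shows "k = 0"
proof -
  obtain t where t: "k = n*t" using assms(3) by (auto simp: dvd_def)
  have "t = 0"
  proof (rule ccontr)
    assume "\<not> ?thesis"
    hence "t \<ge> 1 \<or> t \<le> -1" by auto
    thus False
    proof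
      assume "t \<ge> 1" hence "n*t \<ge> n*1" using assms(1) by (simp add: mult_left_mono)
      thus False using t assms(2) by linarith
    next
      assume "t \<le> -1" hence "n*t \<le> n*(-1)" using assms(1) by (intro mult_left_mono) auto
      thus False using t assms(2) by linarith
    qed
  qed
  thus ?thesis using t by simp
qed

lemma odddvd: fixes m d :: int assumes "odd m" "m dvd 2*d" shows "m dvd d"
proof -
  obtain t where t: "2*d = m*t" using assms(2) by (auto simp: dvd_def)
  have "even (m*t)" using t by (metis dvd_triv_left)
  hence "even t" using assms(1) by simp
  then obtain s where "t = 2*s" by blast
  hence "d = m*s" using t by simp
  thus ?thesis by simp
qed

lemma key:
  fixes n i j :: int
  assumes n0: "n > 0" and nm: "n mod 12 = 2 \<or> n mod 12 = 10"
    and i: "1 \<le> i" "i < n" and j: "1 \<le> j" "j < n" and ij: "i \<noteq> j"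
  defines "a \<equiv> (if i < n div 2 then 3 else 0::int)"
    and "b \<equiv> (if j < n div 2 then 3 else 0::int)"
  shows "\<not> n dvd (3*i - a) - (3*j - b)"
    and "\<not> n dvd (4*i - a) - (4*j - b)"
    and "\<not> n dvd (i - (3*i - a)) - (j - (3*j - b))"
proof -
  define m where "m = n div 2"
  have n2: "n = 2*m" unfolding m_def using nm by presburger
  have mo: "odd m" unfolding m_def using nm by presburger
  have n3: "n mod 3 \<noteq> 0" using nm by presburger
  have en: "even n" using n2 by simp
  have m0: "m > 0" using n0 n2 by simp
  { fix x :: int assume "odd x" "n dvd x"
    hence False using en by (meson dvd_trans) }
  note oddno = this
  have same: "\<not> n dvd 2*(i - j)" if "(i < m) = (j < m)"
  proof
    assume "n dvd 2*(i-j)"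
    hence "2*m dvd 2*(i-j)" using n2 by simp
    then obtain t where "2*(i-j) = 2*m*t" by (auto simp: dvd_def)
    hence "i - j = m*t" by simp
    hence "m dvd (i - j)" by simp
    moreover have "\<bar>i - j\<bar> < m" using that i j n2 by auto
    ultimately have "i - j = 0" using bnd0[of m "i-j"] m0 by simp
    thus False using ij by simp
  qed
  show "\<not> n dvd (3*i - a) - (3*j - b)"
  proof
    assume h: "n dvd (3*i - a) - (3*j - b)"
    show False
    proof (cases "(i < m) = (j < m)")
      case True
      hence e: "(3*i - a) - (3*j - b) = 3*(i-j)" unfolding a_def b_def m_def[symmetric] by auto
      have "n dvd (i - j)" by (rule three[OF n3]) (use h e in simp)
      hence "i - j = 0" using bnd0[of n "i-j"] n0 i j by simp
      thus False using ij by simp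
    next
      case False
      show False
      proof (cases "i < m")
        case True
        hence "j \<ge> m" using False by simp
        hence e: "(3*i - a) - (3*j - b) = 3*(i-j-1)" unfolding a_def b_def m_def[symmetric] using True by auto
        have "n dvd (i - j - 1)" by (rule three[OF n3]) (use h e in simp)
        hence "i - j - 1 = 0" using bnd0[of n "i-j-1"] n0 i j by simp
        thus False using True \<open>j \<ge> m\<close> by simp
      next
        case F: False
        hence "j < m" using False by simp
        hence e: "(3*i - a) - (3*j - b) = 3*(i-j+1)" unfolding a_def b_def m_def[symmetric] using F by auto
        have "n dvd (i - j + 1)" by (rule three[OF n3]) (use h e in simp)
        hence "i - j + 1 = 0" using bnd0[of n "i-j+1"] n0 i j by simp
        thus False using F \<open>j < m\<close> by simp
      qed
    qed
  qed
  show "\<not> n dvd (4*i - a) - (4*j - b)"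
  proof
    assume h: "n dvd (4*i - a) - (4*j - b)"
    show False
    proof (cases "(i < m) = (j < m)")
      case True
      hence e: "(4*i - a) - (4*j - b) = 2*(2*(i-j))" unfolding a_def b_def m_def[symmetric] by auto
      obtain t where "2*(2*(i-j)) = 2*m*t" using h unfolding e n2 by (auto simp: dvd_def)
      hence "2*(i-j) = m*t" by simp
      hence "m dvd 2*(i-j)" by simp
      hence "m dvd (i-j)" by (rule odddvd[OF mo])
      hence "n dvd 2*(i-j)" unfolding n2 by (rule mult_dvd_mono[OF dvd_refl])
      thus False using same True by simp
    next
      case False
      hence "odd ((4*i - a) - (4*j - b))" unfolding a_def b_def m_def[symmetric] by auto
      thus False using oddno h by blast
    qed
  qed
  show "\<not> n dvd (i - (3*i - a)) - (j - (3*j - b))"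
  proof
    assume h: "n dvd (i - (3*i - a)) - (j - (3*j - b))"
    show False
    proof (cases "(i < m) = (j < m)")
      case True
      hence e: "(i - (3*i - a)) - (j - (3*j - b)) = - (2*(i-j))" unfolding a_def b_def m_def[symmetric] by auto
      have "n dvd 2*(i-j)" using h unfolding e by (simp only: dvd_minus_iff)
      thus False using same True by simp
    next
      case False
      hence "odd ((i - (3*i - a)) - (j - (3*j - b)))" unfolding a_def b_def m_def[symmetric] by auto
      thus False using oddno h by blast
    qed
  qed
qed

theorem lemma2:
  fixes n :: int
  assumes "n > 0"
    and "n mod 12 = 2 \<or> n mod 12 = 10"
  shows "\<exists>Q. Q \<subseteq> torus_board n \<and> card Q = nat (n - 1) \<and> conflict_free n Q"
proof -
  define y where "y i = (3*i - (if i < n div 2 then 3 else 0)) mod n" for i :: int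
  define Q where "Q = (\<lambda>i. (i, y i)) ` {1..n-1}"
  have "Q \<subseteq> torus_board n"
    unfolding Q_def torus_board_def y_def using assms(1) by auto
  moreover have "card Q = nat (n - 1)"
  proof -
    have "inj_on (\<lambda>i. (i, y i)) {1..n-1}" by (auto simp: inj_on_def)
    hence "card Q = card {1..n-1}" unfolding Q_def by (rule card_image)
    thus ?thesis by simp
  qed
  moreover have "conflict_free n Q"
    unfolding conflict_free_def
  proof (intro ballI)
    fix p q assume p: "p \<in> Q" and q: "q \<in> Q"
    obtain i where i: "1 \<le> i" "i \<le> n - 1" and pi: "p = (i, y i)" using p unfolding Q_def by auto
    obtain j where j: "1 \<le> j" "j \<le> n - 1" and qj: "q = (j, y j)" using q unfolding Q_def by auto
    show "\<not> queens_conflict n p q"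
    proof (cases "i = j")
      case True thus ?thesis using pi qj by (simp add: queens_conflict_def)
    next
      case False
      define a where "a = (if i < n div 2 then 3 else 0::int)"
      define b where "b = (if j < n div 2 then 3 else 0::int)"
      have ya: "y i = (3*i - a) mod n" and yb: "y j = (3*j - b) mod n"
        unfolding y_def a_def b_def by auto
      have k1: "\<not> n dvd (3*i - a) - (3*j - b)"
        and k2: "\<not> n dvd (4*i - a) - (4*j - b)"
        and k3: "\<not> n dvd (i - (3*i - a)) - (j - (3*j - b))"
        using key[OF assms(1,2), of i j] i j False unfolding a_def b_def by auto
      have c0: "i mod n \<noteq> j mod n" using i j False by simp
      have c1: "y i mod n \<noteq> y j mod n" using k1 unfolding ya yb by (simp add: mod_eq_dvd_iff)
      have c2: "(i + y i) mod n \<noteq> (j + y j) mod n"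
      proof -
        have "(i + y i) mod n = (4*i - a) mod n" unfolding ya by (simp add: mod_add_right_eq)
        moreover have "(j + y j) mod n = (4*j - b) mod n" unfolding yb by (simp add: mod_add_right_eq)
        ultimately show ?thesis using k2 by (metis mod_eq_dvd_iff)
      qed
      have c3: "(i - y i) mod n \<noteq> (j - y j) mod n"
      proof -
        have "(i - y i) mod n = (i - (3*i - a)) mod n" unfolding ya by (simp add: mod_diff_right_eq)
        moreover have "(j - y j) mod n = (j - (3*j - b)) mod n" unfolding yb by (simp add: mod_diff_right_eq)
        ultimately show ?thesis using k3 by (metis mod_eq_dvd_iff)
      qed
      show ?thesis using c0 c1 c2 c3 pi qj by (simp add: queens_conflict_def)
    qed
  qed
  ultimately show ?thesis by blast
qed

end
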